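(* If $u_k,u\in\mathrm{Conv}_{\mathrm{coe}}(\mathbb{R}^n)$ are such that $\delta(u_k,u)\to 0$, then $u_k$ epi-converges to $u$ as $k\to\infty$. Furthermore, if $u_k,u\in\mathrm{Conv}_{\mathrm{sc}}(\mathbb{R}^n)$ and $u_k$ epi-converges to $u$, then $\delta(u_k,u)\to 0$ as $k\to\infty$.
   Context: $\mathrm{Conv}_{\mathrm{coe}}(\mathbb{R}^n)$ is the set of proper, lower semicontinuous, convex, coercive functions $u:\mathbb{R}^n\to\mathbb{R}\cup\{+\infty\}$; $\mathrm{Conv}_{\mathrm{sc}}(\mathbb{R}^n)$ is the subset of super-coercive ones ($\lim_{|x|\to\infty}u(x)/|x|=+\infty$). $u^*(y)=\sup_x(\langle x,y\rangle-u(x))$. $\delta(u,v)=\inf\{\lambda>0:\sup_{|x|\le1/\lambda}|u^*(x)-v^*(x)|\le\lambda\}$. Epi-convergence $u_k\to u$: for every $x$, $\liminf_k u_k(x_k)\ge u(x)$ for all $x_k\to x$ and $\limsup_k u_k(x_k)\le u(x)$ for some $x_k\to x$. *)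

theory Defs
  imports "HOL-Analysis.Analysis"
begin

text \<open>Functions u : R^n -> R \<union> {+\<infinity>} are modelled as maps into ereal that never take the value -\<infinity>.\<close>

definition proper_fun :: "('a \<Rightarrow> ereal) \<Rightarrow> bool" where
  "proper_fun u \<longleftrightarrow> (\<forall>x. u x \<noteq> -\<infinity>) \<and> (\<exists>x. u x \<noteq> \<infinity>)"

definition lsc_fun :: "('a::topological_space \<Rightarrow> ereal) \<Rightarrow> bool" where
  "lsc_fun u \<longleftrightarrow> (\<forall>t::ereal. closed {x. u x \<le> t})"

definition convex_efun :: "('a::real_vector \<Rightarrow> ereal) \<Rightarrow> bool" where
  "convex_efun u \<longleftrightarrow> (\<forall>x y. \<forall>t::real. 0 \<le> t \<and> t \<le> 1 \<longrightarrow>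
      u ((1 - t) *\<^sub>R x + t *\<^sub>R y) \<le> ereal (1 - t) * u x + ereal t * u y)"

definition coercive_fun :: "('a::real_normed_vector \<Rightarrow> ereal) \<Rightarrow> bool" where
  "coercive_fun u \<longleftrightarrow> (u \<longlongrightarrow> \<infinity>) at_infinity"

definition super_coercive_fun :: "('a::real_normed_vector \<Rightarrow> ereal) \<Rightarrow> bool" where
  "super_coercive_fun u \<longleftrightarrow> ((\<lambda>x. u x / ereal (norm x)) \<longlongrightarrow> \<infinity>) at_infinity"

definition Conv_coe :: "('a::euclidean_space \<Rightarrow> ereal) set" where
  "Conv_coe = {u. proper_fun u \<and> lsc_fun u \<and> convex_efun u \<and> coercive_fun u}"

definition Conv_sc :: "('a::euclidean_space \<Rightarrow> ereal) set" where
  "Conv_sc = {u. u \<in> Conv_coe \<and> super_coercive_fun u}"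

definition fconj :: "('a::euclidean_space \<Rightarrow> ereal) \<Rightarrow> 'a \<Rightarrow> ereal" where
  "fconj u y = (SUP x. ereal (inner x y) - u x)"

text \<open>Distance of two extended values, with the convention |(+\<infinity>) - (+\<infinity>)| = 0.\<close>
definition ediff :: "ereal \<Rightarrow> ereal \<Rightarrow> ereal" where
  "ediff a b = (if a = b then 0 else \<bar>a - b\<bar>)"

definition delta :: "('a::euclidean_space \<Rightarrow> ereal) \<Rightarrow> ('a \<Rightarrow> ereal) \<Rightarrow> ereal" where
  "delta u v = Inf {ereal l | l::real. l > 0 \<and>
      (SUP x\<in>cball 0 (1 / l). ediff (fconj u x) (fconj v x)) \<le> ereal l}"

definition epi_converges :: "(nat \<Rightarrow> 'a::topological_space \<Rightarrow> ereal) \<Rightarrow> ('a \<Rightarrow> ereal) \<Rightarrow> bool" where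
  "epi_converges uk u \<longleftrightarrow> (\<forall>x.
      (\<forall>xs. xs \<longlonglongrightarrow> x \<longrightarrow> liminf (\<lambda>k. uk k (xs k)) \<ge> u x) \<and>
      (\<exists>xs. xs \<longlonglongrightarrow> x \<and> limsup (\<lambda>k. uk k (xs k)) \<le> u x))"

end

theory Submission
  imports Defs
begin

lemma conv_real:
  assumes "convex_efun u" "u a = ereal p" "u b = ereal q" "0 \<le> t" "t \<le> 1"
  shows "u ((1 - t) *\<^sub>R a + t *\<^sub>R b) \<le> ereal ((1 - t) * p + t * q)"
  using assms unfolding convex_efun_def by (metis plus_ereal.simps(1) times_ereal.simps(1))

lemma epi_convex:
  assumes cv: "convex_efun u" and nm: "\<forall>z. u z \<noteq> -\<infinity>"
  shows "convex {p::'a::real_vector \<times> real. u (fst p) \<le> ereal (snd p)}"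
proof (rule convexI)
  fix P Q :: "'a \<times> real" and a c :: real
  assume P: "P \<in> {p. u (fst p) \<le> ereal (snd p)}" and Q: "Q \<in> {p. u (fst p) \<le> ereal (snd p)}"
    and h: "0 \<le> a" "0 \<le> c" "a + c = 1"
  obtain z1 s1 where P1: "P = (z1, s1)" by fastforce
  obtain z2 s2 where Q1: "Q = (z2, s2)" by fastforce
  have h1: "u z1 \<le> ereal s1" "u z2 \<le> ereal s2" using P Q P1 Q1 by auto
  obtain p where p: "u z1 = ereal p" using h1(1) nm by (cases "u z1") auto
  obtain q where q: "u z2 = ereal q" using h1(2) nm by (cases "u z2") auto
  have a: "a = 1 - c" using h by simp
  have "u ((1 - c) *\<^sub>R z1 + c *\<^sub>R z2) \<le> ereal ((1 - c) * p + c * q)"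
    by (rule conv_real[OF cv p q]) (use h in auto)
  also have "\<dots> \<le> ereal ((1 - c) * s1 + c * s2)"
    using h h1 p q a by (auto intro!: add_mono mult_left_mono)
  finally show "a *\<^sub>R P + c *\<^sub>R Q \<in> {p. u (fst p) \<le> ereal (snd p)}"
    using a P1 Q1 by simp
qed

lemma FY:
  assumes "fconj v w = ereal F"
  shows "ereal (inner z w - F) \<le> v z"
proof -
  have "ereal (inner z w) - v z \<le> fconj v w" unfolding fconj_def by (rule SUP_upper) simp
  then show ?thesis using assms by (cases "v z") auto
qed

lemma fconj_le:
  assumes "\<And>z. ereal (inner z w + c) \<le> v z"
  shows "fconj v w \<le> ereal (- c)"
  unfolding fconj_def
proof (rule SUP_least)
  fix z
  show "ereal (inner z w) - v z \<le> ereal (- c)"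
    using assms[of z] by (cases "v z") auto
qed

lemma fconj_ge:
  assumes "v z0 = ereal a"
  shows "ereal (inner z0 w - a) \<le> fconj v w"
proof -
  have "ereal (inner z0 w) - v z0 \<le> fconj v w" unfolding fconj_def by (rule SUP_upper) simp
  then show ?thesis using assms by simp
qed

lemma fconj_nm:
  assumes "proper_fun v" shows "fconj v w \<noteq> -\<infinity>"
proof -
  obtain z0 where "v z0 \<noteq> \<infinity>" "v z0 \<noteq> -\<infinity>" using assms unfolding proper_fun_def by auto
  then obtain a where "v z0 = ereal a" by (cases "v z0") auto
  from fconj_ge[of v z0 a w, OF this] show ?thesis by auto
qed


lemma SEP:
  fixes u :: "'a::euclidean_space \<Rightarrow> ereal"
  assumes cv: "convex_efun u" and nm: "\<forall>z. u z \<noteq> -\<infinity>" and dom: "u z0 \<noteq> \<infinity>"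
    and r: "r > 0" and gt: "\<forall>z. dist z x < r \<longrightarrow> ereal m < u z"
  shows "\<exists>y \<beta> b. 0 \<le> \<beta> \<and> (y \<noteq> 0 \<or> \<beta> \<noteq> 0) \<and> (\<forall>z s. u z \<le> ereal s \<longrightarrow> b \<le> inner y z + \<beta> * s)
           \<and> inner y x + r / 2 * norm y + \<beta> * m \<le> b"
proof -
  define S where "S = cball x (r/2) \<times> {..m}"
  define T where "T = {p::'a \<times> real. u (fst p) \<le> ereal (snd p)}"
  have cS: "convex S" unfolding S_def by (intro convex_Times convex_cball) auto
  have cT: "convex T" unfolding T_def by (rule epi_convex[OF cv nm])
  have S0: "S \<noteq> {}" unfolding S_def using r by auto
  obtain p0 where p0: "u z0 = ereal p0" using dom nm by (cases "u z0") auto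
  have T0: "(z0, p0) \<in> T" unfolding T_def using p0 by simp
  have dis: "S \<inter> T = {}"
  proof (rule ccontr)
    assume "S \<inter> T \<noteq> {}"
    then obtain z s where zs: "(z, s) \<in> S" "(z, s) \<in> T" by auto
    then have "dist z x < r" "s \<le> m" "u z \<le> ereal s" using r unfolding S_def T_def
      by (auto simp: dist_commute)
    with gt show False by (metis ereal_less_eq(3) leD order.trans)
  qed
  obtain a b where ab: "a \<noteq> 0" "\<forall>p\<in>S. inner a p \<le> b" "\<forall>p\<in>T. inner a p \<ge> b"
    using separating_hyperplane_sets[OF cS cT S0 _ dis] T0 by blast
  obtain y \<beta> where a: "a = (y, \<beta>)" by fastforce
  have epi: "\<forall>z s. u z \<le> ereal s \<longrightarrow> b \<le> inner y z + \<beta> * s"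
    using ab(3) a unfolding T_def by auto
  define z1 where "z1 = (if y = 0 then x else x + (r/2/norm y) *\<^sub>R y)"
  have z1d: "dist z1 x \<le> r/2" using r unfolding z1_def by (auto simp: dist_norm)
  have z1i: "inner y z1 = inner y x + r / 2 * norm y"
    unfolding z1_def by (auto simp: inner_add_right power2_norm_eq_inner[symmetric] power2_eq_square)
  have "(z1, m) \<in> S" unfolding S_def using z1d by (auto simp: dist_commute)
  then have H: "inner y x + r / 2 * norm y + \<beta> * m \<le> b" using ab(2) a z1i by force
  have beta: "0 \<le> \<beta>"
  proof (rule ccontr)
    assume "\<not> 0 \<le> \<beta>"
    then have bn: "\<beta> < 0" by simp
    define t where "t = (\<bar>inner y z0 + \<beta> * p0\<bar> + \<bar>b\<bar> + 1) / (- \<beta>)"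
    have t0: "t \<ge> 0" unfolding t_def by (rule divide_nonneg_pos) (use bn in simp_all)
    have bt: "\<beta> * t = - (\<bar>inner y z0 + \<beta> * p0\<bar> + \<bar>b\<bar> + 1)" unfolding t_def using bn by (simp add: divide_simps)
    have "u z0 \<le> ereal (p0 + t)" using p0 t0 by simp
    then have "b \<le> inner y z0 + \<beta> * (p0 + t)" using epi by blast
    also have "\<dots> = inner y z0 + \<beta> * p0 + \<beta> * t" by (simp add: algebra_simps)
    finally show False using bt by linarith
  qed
  have yb: "y \<noteq> 0 \<or> \<beta> \<noteq> 0" using ab(1) a by (auto simp: zero_prod_def)
  show ?thesis
    apply (rule exI[of _ y], rule exI[of _ \<beta>], rule exI[of _ b])
    using beta yb epi H by simp
qed


lemma lsc_ball:
  assumes "lsc_fun u" "ereal m < u x"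
  shows "\<exists>r>0. \<forall>z. dist z x < r \<longrightarrow> ereal m < u z"
proof -
  have "closed {z. u z \<le> ereal m}" using assms(1) unfolding lsc_fun_def by blast
  then have "open (- {z. u z \<le> ereal m})" by (simp add: open_Compl)
  moreover have "x \<in> - {z. u z \<le> ereal m}" using assms(2) by auto
  ultimately obtain e where "e > 0" "ball x e \<subseteq> - {z. u z \<le> ereal m}" by (meson openE)
  then have "\<forall>z. dist z x < e \<longrightarrow> ereal m < u z"
    by (auto simp: dist_commute not_le subset_iff mem_ball)
  then show ?thesis using \<open>e > 0\<close> by blast
qed

lemma A0:
  fixes u :: "'a::euclidean_space \<Rightarrow> ereal"
  assumes cv: "convex_efun u" and pr: "proper_fun u" and ls: "lsc_fun u"
  shows "\<exists>y c. \<forall>z. ereal (inner z y + c) \<le> u z"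
proof -
  have nm: "\<forall>z. u z \<noteq> -\<infinity>" using pr unfolding proper_fun_def by auto
  obtain z0 where z0: "u z0 \<noteq> \<infinity>" using pr unfolding proper_fun_def by auto
  obtain p0 where p0: "u z0 = ereal p0" using z0 nm by (cases "u z0") auto
  have "ereal (p0 - 1) < u z0" using p0 by simp
  then obtain r where r: "r > 0" "\<forall>z. dist z z0 < r \<longrightarrow> ereal (p0 - 1) < u z"
    using lsc_ball[OF ls] by blast
  obtain y \<beta> b where s: "0 \<le> \<beta>" "y \<noteq> 0 \<or> \<beta> \<noteq> 0" "\<forall>z s. u z \<le> ereal s \<longrightarrow> b \<le> inner y z + \<beta> * s"
      "inner y z0 + r / 2 * norm y + \<beta> * (p0 - 1) \<le> b"
    using SEP[OF cv nm z0 r(1) r(2)] by blast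
  have e0: "b \<le> inner y z0 + \<beta> * p0" using s(3) p0 by simp
  have bpos: "\<beta> > 0"
  proof (rule ccontr)
    assume "\<not> \<beta> > 0"
    then have "\<beta> = 0" using s(1) by simp
    then have "y \<noteq> 0" "r / 2 * norm y \<le> 0" using s(2,4) e0 by auto
    then show False using r(1) by (simp add: mult_le_0_iff)
  qed
  have "ereal (inner z (- (1/\<beta>) *\<^sub>R y) + b / \<beta>) \<le> u z" for z
  proof (cases "u z")
    case (real s')
    then have "b \<le> inner y z + \<beta> * s'" using s(3) by simp
    then have "(b - inner y z) / \<beta> \<le> s'" using bpos by (simp add: divide_le_eq mult.commute)
    then show ?thesis using real by (simp add: diff_divide_distrib inner_commute)
  qed (use nm in auto)
  then show ?thesis by blast
qed

lemma BB:
  fixes u :: "'a::euclidean_space \<Rightarrow> ereal"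
  assumes co: "coercive_fun u" and mi: "\<forall>z. ereal (inner z y + c) \<le> u z"
  shows "\<exists>M. \<forall>z. ereal M \<le> u z"
proof -
  have "eventually (\<lambda>z. ereal 0 < u z) at_infinity"
    using co unfolding coercive_fun_def tendsto_PInfty by blast
  then obtain \<rho> where rho: "\<forall>z. \<rho> \<le> norm z \<longrightarrow> ereal 0 < u z"
    unfolding eventually_at_infinity by blast
  have "ereal (min 0 (c - norm y * \<bar>\<rho>\<bar>)) \<le> u z" for z
  proof (cases "\<rho> \<le> norm z")
    case True then show ?thesis using rho by (metis less_imp_le min.cobounded1 order.trans ereal_less_eq(3))
  next
    case False
    have "- (norm z * norm y) \<le> inner z y" using Cauchy_Schwarz_ineq2[of z y] by (simp add: abs_le_iff)
    moreover have "norm z * norm y \<le> \<bar>\<rho>\<bar> * norm y" using False by (intro mult_right_mono) auto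
    ultimately have "c - norm y * \<bar>\<rho>\<bar> \<le> inner z y + c" by (simp add: mult.commute)
    then have "min 0 (c - norm y * \<bar>\<rho>\<bar>) \<le> inner z y + c" by linarith
    then have "ereal (min 0 (c - norm y * \<bar>\<rho>\<bar>)) \<le> ereal (inner z y + c)"
      by (rule ereal_less_eq(3)[THEN iffD2])
    then show ?thesis using mi order.trans by blast
  qed
  then show ?thesis by blast
qed


lemma KEY:
  fixes u :: "'a::euclidean_space \<Rightarrow> ereal"
  assumes cv: "convex_efun u" and nm: "\<forall>z. u z \<noteq> -\<infinity>" and dom: "u z0 \<noteq> \<infinity>"
    and bb: "\<forall>z. ereal M \<le> u z"
    and r: "r > 0" and gt: "\<forall>z. dist z x < r \<longrightarrow> ereal m < u z"
    and R: "R > 0" and hR: "m \<le> r / 2 * R + min m M"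
  shows "\<exists>w c. norm w \<le> R \<and> (\<forall>z. ereal (inner z w + c) \<le> u z) \<and> m \<le> inner x w + c"
proof -
  obtain y \<beta> b where s: "0 \<le> \<beta>" "y \<noteq> 0 \<or> \<beta> \<noteq> 0" "\<forall>z s. u z \<le> ereal s \<longrightarrow> b \<le> inner y z + \<beta> * s"
      and H: "inner y x + r / 2 * norm y + \<beta> * m \<le> b"
    using SEP[OF cv nm dom r gt] by blast
  have Mz: "M \<le> s'" if "u z = ereal s'" for z s' using bb that by (metis ereal_less_eq(3))
  show ?thesis
  proof (cases "\<beta> = 0")
    case True
    then have y0: "y \<noteq> 0" using s(2) by simp
    then have ny: "norm y > 0" by simp
    define w where "w = - (R / norm y) *\<^sub>R y"
    define c where "c = M + (R / norm y) * b"
    have nw: "norm w \<le> R" unfolding w_def using R ny by simp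
    have "ereal (inner z w + c) \<le> u z" for z
    proof (cases "u z")
      case (real s')
      then have "b \<le> inner y z + \<beta> * s'" using s(3) by simp
      then have "b \<le> inner y z" using True by simp
      then have "(R / norm y) * b \<le> (R / norm y) * inner y z" using R ny by (intro mult_left_mono) auto
      then have "inner z w + c \<le> M" unfolding w_def c_def by (simp add: inner_commute)
      then show ?thesis using Mz[OF real] real by simp
    qed (use nm in auto)
    moreover have "m \<le> inner x w + c"
    proof -
      have "r / 2 * norm y \<le> b - inner y x" using H True by simp
      then have "(R / norm y) * (r / 2 * norm y) \<le> (R / norm y) * (b - inner y x)"
        using R ny by (intro mult_left_mono) auto
      then have "r / 2 * R \<le> (R / norm y) * (b - inner y x)" using ny by (simp add: mult.commute)
      then have "r / 2 * R + M \<le> inner x w + c" unfolding w_def c_def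
        by (simp add: inner_commute algebra_simps)
      then show ?thesis using hR by linarith
    qed
    ultimately show ?thesis using nw by blast
  next
    case False
    then have bp: "\<beta> > 0" using s(1) by simp
    define v where "v = - (1/\<beta>) *\<^sub>R y"
    define c where "c = b / \<beta>"
    have mv: "ereal (inner z v + c) \<le> u z" for z
    proof (cases "u z")
      case (real s')
      then have "b \<le> inner y z + \<beta> * s'" using s(3) by simp
      then have "(b - inner y z) / \<beta> \<le> s'" using bp by (simp add: divide_le_eq mult.commute)
      then show ?thesis using real unfolding v_def c_def by (simp add: diff_divide_distrib inner_commute)
    qed (use nm in auto)
    have nv: "norm v = norm y / \<beta>" unfolding v_def using bp by simp
    have Hx: "r / 2 * norm v + m \<le> inner x v + c"
    proof -
      have "(r / 2 * norm y + \<beta> * m) / \<beta> \<le> (b - inner y x) / \<beta>"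
        using H bp by (intro divide_right_mono) auto
      then show ?thesis unfolding nv v_def c_def using bp
        by (simp add: add_divide_distrib diff_divide_distrib inner_commute)
    qed
    show ?thesis
    proof (cases "norm v \<le> R")
      case True
      moreover have "m \<le> inner x v + c" using Hx r by (smt (verit) norm_ge_zero zero_le_divide_iff mult_nonneg_nonneg)
      ultimately show ?thesis using mv by blast
    next
      case False
      then have nvp: "norm v > R" by simp
      then have nv0: "norm v > 0" using R by linarith
      define \<theta> where "\<theta> = R / norm v"
      have th: "0 < \<theta>" "\<theta> < 1" unfolding \<theta>_def using R nvp nv0 by auto
      define w where "w = \<theta> *\<^sub>R v"
      define c' where "c' = \<theta> * c + (1 - \<theta>) * M"
      have nw: "norm w = R" unfolding w_def \<theta>_def using R nv0 by simp
      have "ereal (inner z w + c') \<le> u z" for z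
      proof (cases "u z")
        case (real s')
        have a1: "inner z v + c \<le> s'" using mv[of z] real by simp
        have a2: "M \<le> s'" using Mz[OF real] .
        have "\<theta> * (inner z v + c) \<le> \<theta> * s'" using a1 th by (intro mult_left_mono) auto
        moreover have "(1 - \<theta>) * M \<le> (1 - \<theta>) * s'" using a2 th by (intro mult_left_mono) auto
        ultimately have "inner z w + c' \<le> \<theta> * s' + (1 - \<theta>) * s'"
          unfolding w_def c'_def by (simp add: algebra_simps)
        then show ?thesis using real by (simp add: algebra_simps)
      qed (use nm in auto)
      moreover have "m \<le> inner x w + c'"
      proof -
        have "\<theta> * (r / 2 * norm v + m) \<le> \<theta> * (inner x v + c)" using Hx th by (intro mult_left_mono) auto
        moreover have "\<theta> * norm v = R" unfolding \<theta>_def using nv0 by simp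
        moreover have "min m M \<le> \<theta> * m + (1 - \<theta>) * M"
        proof (cases "m \<le> M")
          case True
          then have "(1 - \<theta>) * m \<le> (1 - \<theta>) * M" using th by (intro mult_left_mono) auto
          then show ?thesis using True by (simp add: algebra_simps)
        next
          case False
          then have "\<theta> * M \<le> \<theta> * m" using th by (intro mult_left_mono) auto
          then show ?thesis using False by (simp add: algebra_simps)
        qed
        moreover have "\<theta> * (r / 2 * norm v + m) = r / 2 * R + \<theta> * m"
        proof -
          have "\<theta> * (r / 2 * norm v + m) = r / 2 * (\<theta> * norm v) + \<theta> * m" by (simp add: algebra_simps)
          also have "\<dots> = r / 2 * R + \<theta> * m" using \<open>\<theta> * norm v = R\<close> by simp
          finally show ?thesis .
        qed
        moreover have "inner x w + c' = \<theta> * (inner x v + c) + (1 - \<theta>) * M"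
          unfolding w_def c'_def by (simp add: algebra_simps)
        ultimately have "r / 2 * R + min m M \<le> inner x w + c'" by linarith
        then show ?thesis using hR by linarith
      qed
      ultimately show ?thesis using nw by (intro exI[of _ w] exI[of _ c']) auto
    qed
  qed
qed


lemma delta_conv:
  assumes d: "(\<lambda>k. delta (uk k) u) \<longlonglongrightarrow> 0" and R: "R > 0" and e: "\<epsilon> > 0"
  shows "eventually (\<lambda>k. \<forall>w. norm w \<le> R \<longrightarrow> ediff (fconj (uk k) w) (fconj u w) \<le> ereal \<epsilon>) sequentially"
proof -
  define e where "e = min \<epsilon> (1 / R)"
  have e0: "e > 0" unfolding e_def using R e by simp
  have "eventually (\<lambda>k. delta (uk k) u < ereal e) sequentially"
    using order_tendstoD(2)[OF d] e0 by simp
  then show ?thesis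
  proof (rule eventually_mono)
    fix k assume "delta (uk k) u < ereal e"
    then obtain l where l: "l > 0" "(SUP x\<in>cball 0 (1 / l). ediff (fconj (uk k) x) (fconj u x)) \<le> ereal l"
      "ereal l < ereal e"
      unfolding delta_def Inf_less_iff by auto
    have le: "l < 1 / R" "l < \<epsilon>" using l(3) unfolding e_def by auto
    show "\<forall>w. norm w \<le> R \<longrightarrow> ediff (fconj (uk k) w) (fconj u w) \<le> ereal \<epsilon>"
    proof (intro allI impI)
      fix w :: 'a assume w: "norm w \<le> R"
      have "R < 1 / l" using le(1) l(1) R by (simp add: field_simps)
      then have "w \<in> cball 0 (1 / l)" using w by simp
      then have "ediff (fconj (uk k) w) (fconj u w) \<le> (SUP x\<in>cball 0 (1 / l). ediff (fconj (uk k) x) (fconj u x))"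
        by (rule SUP_upper)
      also have "\<dots> \<le> ereal \<epsilon>" using l(2) le(2) by (meson ereal_less_eq(3) less_imp_le order.trans)
      finally show "ediff (fconj (uk k) w) (fconj u w) \<le> ereal \<epsilon>" .
    qed
  qed
qed

lemma ediff_fin:
  assumes "ediff a (ereal b) \<le> ereal e"
  shows "\<exists>a'. a = ereal a' \<and> \<bar>a' - b\<bar> \<le> e"
  using assms unfolding ediff_def by (cases a) (auto split: if_splits)

lemma ediff_bnd:
  assumes "ediff a b \<le> ereal e" "a \<le> ereal A" "ereal B \<le> b" "a \<noteq> -\<infinity>"
  shows "B - A \<le> e"
proof -
  obtain a' where a': "a = ereal a'" using assms(2,4) by (cases a) auto
  show ?thesis
  proof (cases b)
    case (real b')
    then show ?thesis using assms a' unfolding ediff_def by (auto split: if_splits)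
  next
    case PInf
    then show ?thesis using assms a' unfolding ediff_def by auto
  next
    case MInf
    then show ?thesis using assms by auto
  qed
qed


lemma coe_facts:
  assumes "u \<in> Conv_coe"
  shows "convex_efun u" "proper_fun u" "lsc_fun u" "coercive_fun u" "\<forall>z. u z \<noteq> -\<infinity>" "\<exists>z. u z \<noteq> \<infinity>"
    "\<exists>M. \<forall>z. ereal M \<le> u z"
proof -
  show cv: "convex_efun u" and pr: "proper_fun u" and ls: "lsc_fun u" and co: "coercive_fun u"
    using assms unfolding Conv_coe_def by auto
  show "\<forall>z. u z \<noteq> -\<infinity>" "\<exists>z. u z \<noteq> \<infinity>" using pr unfolding proper_fun_def by auto
  obtain y c where "\<forall>z. ereal (inner z y + c) \<le> u z" using A0[OF cv pr ls] by blast
  then show "\<exists>M. \<forall>z. ereal M \<le> u z" using BB[OF co] by blast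
qed

lemma P1_liminf:
  fixes uk :: "nat \<Rightarrow> 'a::euclidean_space \<Rightarrow> ereal"
  assumes uk: "\<forall>k. uk k \<in> Conv_coe" and u: "u \<in> Conv_coe"
    and d: "(\<lambda>k. delta (uk k) u) \<longlonglongrightarrow> 0" and xs: "xs \<longlonglongrightarrow> x"
  shows "u x \<le> liminf (\<lambda>k. uk k (xs k))"
  unfolding le_Liminf_iff
proof (intro allI impI)
  fix y assume y: "y < u x"
  obtain m1 where m1: "y < ereal m1" "ereal m1 < u x" using ereal_dense2[OF y] by blast
  obtain m where m: "ereal m1 < ereal m" "ereal m < u x" using ereal_dense2[OF m1(2)] by blast
  note uf = coe_facts[OF u]
  obtain r where r: "r > 0" "\<forall>z. dist z x < r \<longrightarrow> ereal m < u z" using lsc_ball[OF uf(3) m(2)] by blast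
  obtain M where M: "\<forall>z. ereal M \<le> u z" using uf(7) by blast
  obtain z0 where z0: "u z0 \<noteq> \<infinity>" using uf(6) by blast
  define R where "R = 2 * (2 * \<bar>m\<bar> + \<bar>M\<bar>) / r + 1"
  have "0 \<le> 2 * (2 * \<bar>m\<bar> + \<bar>M\<bar>) / r" using r by (intro divide_nonneg_pos) auto
  then have R0: "R > 0" unfolding R_def by linarith
  have "r / 2 * R = 2 * \<bar>m\<bar> + \<bar>M\<bar> + r / 2" unfolding R_def using r by (simp add: field_simps)
  then have hR: "m \<le> r / 2 * R + min m M" using r by linarith
  obtain w c where wc: "norm w \<le> R" "\<forall>z. ereal (inner z w + c) \<le> u z" "m \<le> inner x w + c"
    using KEY[OF uf(1) uf(5) z0 M r R0 hR] by blast
  have "fconj u w \<le> ereal (- c)" using wc(2) by (intro fconj_le) auto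
  moreover have "fconj u w \<noteq> -\<infinity>" using fconj_nm[OF uf(2)] .
  ultimately obtain F where F: "fconj u w = ereal F" "F \<le> - c" by (cases "fconj u w") auto
  define \<eta> where "\<eta> = (m - m1) / 3"
  have eta: "\<eta> > 0" unfolding \<eta>_def using m(1) by simp
  have ev1: "eventually (\<lambda>k. \<forall>w'. norm w' \<le> norm w + 1 \<longrightarrow> ediff (fconj (uk k) w') (fconj u w') \<le> ereal \<eta>) sequentially"
    by (rule delta_conv[OF d _ eta]) (simp add: add_nonneg_pos)
  have "(\<lambda>k. inner (xs k) w) \<longlonglongrightarrow> inner x w" by (intro tendsto_intros xs)
  then have ev2: "eventually (\<lambda>k. inner x w - \<eta> < inner (xs k) w) sequentially"
    using order_tendstoD(1) eta by force
  show "eventually (\<lambda>k. y < uk k (xs k)) sequentially"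
    using ev1 ev2
  proof eventually_elim
    case (elim k)
    have "ediff (fconj (uk k) w) (ereal F) \<le> ereal \<eta>" using elim(1)[rule_format, of w] F(1) by simp
    then obtain Fk where Fk: "fconj (uk k) w = ereal Fk" "\<bar>Fk - F\<bar> \<le> \<eta>" using ediff_fin by blast
    have "ereal (inner (xs k) w - Fk) \<le> uk k (xs k)" by (rule FY[OF Fk(1)])
    moreover have "m1 < inner (xs k) w - Fk"
    proof -
      have "m1 < m" using m(1) by simp
      moreover have "Fk \<le> F + \<eta>" using Fk(2) by (simp add: abs_le_iff)
      moreover have "3 * \<eta> = m - m1" unfolding \<eta>_def by simp
      ultimately show ?thesis using elim(2) F(2) wc(3) by linarith
    qed
    ultimately show ?case using m1(1) by (meson ereal_less_eq(3) le_less_trans less_imp_le order.strict_trans2 ereal_less(2))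
  qed
qed


lemma seq_constr:
  fixes f :: "nat \<Rightarrow> 'a::metric_space \<Rightarrow> ereal"
  assumes ev: "\<forall>\<delta>>0. eventually (\<lambda>k. \<exists>z. dist z x < \<delta> \<and> f k z \<le> ereal (a + \<delta>)) sequentially"
  shows "\<exists>xs. xs \<longlonglongrightarrow> x \<and> limsup (\<lambda>k. f k (xs k)) \<le> ereal a"
proof -
  define E where "E k = {\<delta>. \<delta> > 0 \<and> (\<exists>z. dist z x < \<delta> \<and> f k z \<le> ereal (a + \<delta>))}" for k
  have bdd: "bdd_below (E k)" for k unfolding E_def by (rule bdd_belowI[of _ 0]) auto
  have "\<forall>k. \<exists>d z. E k \<noteq> {} \<longrightarrow> (dist z x < d \<and> f k z \<le> ereal (a + d) \<and> d < Inf (E k) + 1 / Suc k)"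
  proof
    fix k
    show "\<exists>d z. E k \<noteq> {} \<longrightarrow> (dist z x < d \<and> f k z \<le> ereal (a + d) \<and> d < Inf (E k) + 1 / Suc k)"
    proof (cases "E k = {}")
      case False
      have "Inf (E k) < Inf (E k) + 1 / Suc k" by simp
      then obtain d where d: "d \<in> E k" "d < Inf (E k) + 1 / Suc k"
        using cInf_less_iff[OF False bdd] by blast
      then show ?thesis unfolding E_def by blast
    qed simp
  qed
  then obtain D Z where DZ: "\<And>k. E k \<noteq> {} \<Longrightarrow> dist (Z k) x < D k \<and> f k (Z k) \<le> ereal (a + D k) \<and> D k < Inf (E k) + 1 / Suc k"
    by metis
  define xs where "xs k = (if E k \<noteq> {} then Z k else x)" for k
  have key: "eventually (\<lambda>k. dist (xs k) x < \<delta> \<and> f k (xs k) \<le> ereal (a + \<delta>)) sequentially" if "\<delta> > 0" for \<delta>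
  proof -
    have "\<delta>/2 > 0" using that by simp
    then have "eventually (\<lambda>k. \<exists>z. dist z x < \<delta>/2 \<and> f k z \<le> ereal (a + \<delta>/2)) sequentially"
      using ev by blast
    then have e1: "eventually (\<lambda>k. \<delta>/2 \<in> E k) sequentially"
      by (rule eventually_mono) (use \<open>\<delta>/2 > 0\<close> in \<open>simp add: E_def\<close>)
    have "eventually (\<lambda>k. 1 / real (Suc k) < \<delta>/2) sequentially"
      using order_tendstoD(2)[OF LIMSEQ_inverse_real_of_nat, of "\<delta>/2"] that by (simp add: inverse_eq_divide)
    with e1 show ?thesis
    proof eventually_elim
      case (elim k)
      then have ne: "E k \<noteq> {}" by auto
      have "Inf (E k) \<le> \<delta>/2" using cInf_lower[OF elim(1) bdd] .
      then have "D k < \<delta>" using DZ[OF ne] elim(2) by linarith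
      then show ?case using DZ[OF ne] ne unfolding xs_def
        by (auto intro: order.trans[of _ "ereal (a + D k)"])
    qed
  qed
  have "xs \<longlonglongrightarrow> x"
  proof (rule tendstoI)
    fix e :: real assume "e > 0"
    from key[OF this] show "eventually (\<lambda>k. dist (xs k) x < e) sequentially" by (rule eventually_mono) simp
  qed
  moreover have "limsup (\<lambda>k. f k (xs k)) \<le> ereal a"
    unfolding Limsup_le_iff
  proof (intro allI impI)
    fix y assume "ereal a < y"
    then obtain t where t: "ereal a < ereal t" "ereal t < y" using ereal_dense2 by blast
    then have "t - a > 0" by simp
    from key[OF this] show "eventually (\<lambda>k. f k (xs k) < y) sequentially"
    proof (rule eventually_mono)
      fix k assume "dist (xs k) x < t - a \<and> f k (xs k) \<le> ereal (a + (t - a))"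
      then have "f k (xs k) \<le> ereal t" by simp
      then show "f k (xs k) < y" using t(2) by (rule le_less_trans)
    qed
  qed
  ultimately show ?thesis by blast
qed

lemma P1_limsup:
  fixes uk :: "nat \<Rightarrow> 'a::euclidean_space \<Rightarrow> ereal"
  assumes uk: "\<forall>k. uk k \<in> Conv_coe" and u: "u \<in> Conv_coe"
    and d: "(\<lambda>k. delta (uk k) u) \<longlonglongrightarrow> 0"
  shows "\<exists>xs. xs \<longlonglongrightarrow> x \<and> limsup (\<lambda>k. uk k (xs k)) \<le> u x"
proof (cases "u x = \<infinity>")
  case True
  then show ?thesis by (intro exI[of _ "\<lambda>_. x"]) auto
next
  case False
  note uf = coe_facts[OF u]
  obtain a where a: "u x = ereal a" using False uf(5) by (cases "u x") auto
  obtain M where M: "\<forall>z. ereal M \<le> u z" using uf(7) by blast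
  have "fconj u 0 \<le> ereal (- M)" using M by (intro fconj_le) auto
  moreover have "fconj u 0 \<noteq> -\<infinity>" using fconj_nm[OF uf(2)] .
  ultimately obtain F0 where F0: "fconj u 0 = ereal F0" by (cases "fconj u 0") auto
  have "\<forall>\<delta>>0. eventually (\<lambda>k. \<exists>z. dist z x < \<delta> \<and> uk k z \<le> ereal (a + \<delta>)) sequentially"
  proof (intro allI impI)
    fix \<delta> :: real assume dp: "\<delta> > 0"
    define M' where "M' = - (F0 + 1)"
    define m where "m = a + \<delta>"
    define R where "R = 2 * (2 * \<bar>m\<bar> + \<bar>M'\<bar>) / \<delta> + 1"
    have "0 \<le> 2 * (2 * \<bar>m\<bar> + \<bar>M'\<bar>) / \<delta>" using dp by (intro divide_nonneg_pos) auto
    then have R0: "R > 0" unfolding R_def by linarith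
    have "\<delta> / 2 * R = 2 * \<bar>m\<bar> + \<bar>M'\<bar> + \<delta> / 2" unfolding R_def using dp by (simp add: field_simps)
    then have hR: "m \<le> \<delta> / 2 * R + min m M'" using dp by linarith
    have ev1: "eventually (\<lambda>k. \<forall>w. norm w \<le> 1 \<longrightarrow> ediff (fconj (uk k) w) (fconj u w) \<le> ereal 1) sequentially"
      by (rule delta_conv[OF d]) auto
    have ev2: "eventually (\<lambda>k. \<forall>w. norm w \<le> R \<longrightarrow> ediff (fconj (uk k) w) (fconj u w) \<le> ereal (\<delta>/2)) sequentially"
      by (rule delta_conv[OF d R0]) (use dp in auto)
    from ev1 ev2 show "eventually (\<lambda>k. \<exists>z. dist z x < \<delta> \<and> uk k z \<le> ereal (a + \<delta>)) sequentially"
    proof eventually_elim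
      case (elim k)
      note ukf = coe_facts[OF uk[rule_format, of k]]
      have "ediff (fconj (uk k) 0) (ereal F0) \<le> ereal 1" using elim(1)[rule_format, of 0] F0 by simp
      then obtain Fk0 where Fk0: "fconj (uk k) 0 = ereal Fk0" "\<bar>Fk0 - F0\<bar> \<le> 1" using ediff_fin by blast
      have Mk: "\<forall>z. ereal M' \<le> uk k z"
      proof
        fix z
        have "ereal (inner z 0 - Fk0) \<le> uk k z" by (rule FY[OF Fk0(1)])
        moreover have "M' \<le> inner z 0 - Fk0" using Fk0(2) unfolding M'_def by (simp add: abs_le_iff)
        ultimately show "ereal M' \<le> uk k z" by (meson ereal_less_eq(3) order.trans)
      qed
      show ?case
      proof (rule ccontr)
        assume "\<not> (\<exists>z. dist z x < \<delta> \<and> uk k z \<le> ereal (a + \<delta>))"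
        then have gt: "\<forall>z. dist z x < \<delta> \<longrightarrow> ereal m < uk k z" unfolding m_def by (auto simp: not_le)
        obtain z0 where z0: "uk k z0 \<noteq> \<infinity>" using ukf(6) by blast
        obtain w c where wc: "norm w \<le> R" "\<forall>z. ereal (inner z w + c) \<le> uk k z" "m \<le> inner x w + c"
          using KEY[OF ukf(1) ukf(5) z0 Mk dp gt R0 hR] by blast
        have A: "fconj (uk k) w \<le> ereal (- c)" using wc(2) by (intro fconj_le) auto
        have B: "ereal (inner x w - a) \<le> fconj u w" by (rule fconj_ge[of u x a w, OF a])
        have "inner x w - a - (- c) \<le> \<delta> / 2"
          by (rule ediff_bnd[OF elim(2)[rule_format, OF wc(1)] A B fconj_nm[OF ukf(2)]])
        then show False using wc(3) dp unfolding m_def by linarith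
      qed
    qed
  qed
  from seq_constr[OF this] show ?thesis using a by simp
qed


lemma sc_growth:
  fixes u :: "'a::euclidean_space \<Rightarrow> ereal"
  assumes u: "u \<in> Conv_sc"
  shows "\<exists>\<rho>>0. \<forall>z. \<rho> \<le> norm z \<longrightarrow> ereal (K * norm z) \<le> u z"
proof -
  have sc: "super_coercive_fun u" and nm: "\<forall>z. u z \<noteq> -\<infinity>"
    using u coe_facts(5)[of u] unfolding Conv_sc_def by auto
  have "eventually (\<lambda>z. ereal K < u z / ereal (norm z)) at_infinity"
    using sc unfolding super_coercive_fun_def tendsto_PInfty by blast
  then obtain b where b: "\<forall>z. b \<le> norm z \<longrightarrow> ereal K < u z / ereal (norm z)"
    unfolding eventually_at_infinity by blast
  have "ereal (K * norm z) \<le> u z" if z: "max b 1 \<le> norm z" for z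
  proof -
    have n0: "norm z > 0" using z by linarith
    have lt: "ereal K < u z / ereal (norm z)" using b z by auto
    show ?thesis
    proof (cases "u z")
      case (real s)
      then have "K < s / norm z" using lt n0 by simp
      then have "K * norm z < s" using n0 by (simp add: field_simps)
      then show ?thesis using real by simp
    qed (use nm in auto)
  qed
  then show ?thesis by (intro exI[of _ "max b 1"]) auto
qed

lemma sc_conj_fin:
  fixes u :: "'a::euclidean_space \<Rightarrow> ereal"
  assumes u: "u \<in> Conv_sc"
  shows "\<exists>B. fconj u w = ereal B"
proof -
  have uc: "u \<in> Conv_coe" using u unfolding Conv_sc_def by auto
  note uf = coe_facts[OF uc]
  obtain M where M: "\<forall>z. ereal M \<le> u z" using uf(7) by blast
  obtain \<rho> where rho: "\<rho> > 0" "\<forall>z. \<rho> \<le> norm z \<longrightarrow> ereal (norm w * norm z) \<le> u z"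
    using sc_growth[OF u] by blast
  define B where "B = max 0 (\<rho> * norm w - M)"
  have "ereal (inner z w + (- B)) \<le> u z" for z
  proof (cases "\<rho> \<le> norm z")
    case True
    have "inner z w \<le> norm w * norm z" using Cauchy_Schwarz_ineq2[of z w] by (simp add: mult.commute)
    then have "inner z w + (- B) \<le> norm w * norm z" unfolding B_def by linarith
    then show ?thesis using rho(2) True by (meson ereal_less_eq(3) order.trans)
  next
    case False
    have "inner z w \<le> norm z * norm w" using Cauchy_Schwarz_ineq2[of z w] by simp
    also have "\<dots> \<le> \<rho> * norm w" using False by (intro mult_right_mono) auto
    finally have "inner z w + (- B) \<le> M" unfolding B_def by linarith
    then show ?thesis using M by (meson ereal_less_eq(3) order.trans)
  qed
  then have "fconj u w \<le> ereal B" using fconj_le[of w "- B" u] by simp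
  moreover have "fconj u w \<noteq> -\<infinity>" using fconj_nm[OF uf(2)] .
  ultimately show ?thesis by (cases "fconj u w") auto
qed

lemma conj_convex:
  assumes F: "\<And>w. fconj u w = ereal (F w)"
  shows "convex_on UNIV F"
proof (rule convex_onI)
  fix t :: real and a b :: 'a assume t: "0 < t" "t < 1"
  have "fconj u ((1 - t) *\<^sub>R a + t *\<^sub>R b) \<le> ereal ((1 - t) * F a + t * F b)"
    unfolding fconj_def
  proof (rule SUP_least)
    fix z
    show "ereal (inner z ((1 - t) *\<^sub>R a + t *\<^sub>R b)) - u z \<le> ereal ((1 - t) * F a + t * F b)"
    proof (cases "u z")
      case (real s)
      have "ereal (inner z a - F a) \<le> u z" "ereal (inner z b - F b) \<le> u z" using FY[OF F] by auto
      then have h: "inner z a - s \<le> F a" "inner z b - s \<le> F b" using real by auto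
      have "(1 - t) * (inner z a - s) \<le> (1 - t) * F a" using h t by (intro mult_left_mono) auto
      moreover have "t * (inner z b - s) \<le> t * F b" using h t by (intro mult_left_mono) auto
      ultimately have "inner z ((1 - t) *\<^sub>R a + t *\<^sub>R b) - s \<le> (1 - t) * F a + t * F b"
        by (simp add: inner_add_right algebra_simps)
      then show ?thesis using real by simp
    qed (use FY[OF F, of z a] in auto)
  qed
  then show "F ((1 - t) *\<^sub>R a + t *\<^sub>R b) \<le> (1 - t) * F a + t * F b" using F by simp
qed simp

lemma conj_cont:
  fixes F :: "'a::euclidean_space \<Rightarrow> real"
  assumes F: "\<And>w. fconj u w = ereal (F w)"
  shows "continuous_on UNIV F"
  by (rule convex_on_continuous[OF open_UNIV conj_convex[OF F]])


lemma subseq_ext: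
  fixes g :: "nat \<Rightarrow> 'b::metric_space"
  assumes sm: "strict_mono \<sigma>" and g: "g \<longlonglongrightarrow> l"
  shows "(\<lambda>k. if \<exists>j. \<sigma> j = k then g (SOME j. \<sigma> j = k) else l) \<longlonglongrightarrow> l"
proof (rule tendstoI)
  fix e :: real assume e: "e > 0"
  obtain N where N: "\<forall>j\<ge>N. dist (g j) l < e" using tendstoD[OF g e] unfolding eventually_sequentially by blast
  have "\<forall>k\<ge>\<sigma> N. dist (if \<exists>j. \<sigma> j = k then g (SOME j. \<sigma> j = k) else l) l < e"
  proof (intro allI impI)
    fix k assume k: "\<sigma> N \<le> k"
    show "dist (if \<exists>j. \<sigma> j = k then g (SOME j. \<sigma> j = k) else l) l < e"
    proof (cases "\<exists>j. \<sigma> j = k")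
      case True
      then have s: "\<sigma> (SOME j. \<sigma> j = k) = k" by (rule someI_ex)
      then have "N \<le> (SOME j. \<sigma> j = k)" using k strict_mono_less_eq[OF sm] by metis
      then show ?thesis using True N by auto
    qed (use e in auto)
  qed
  then show "eventually (\<lambda>k. dist (if \<exists>j. \<sigma> j = k then g (SOME j. \<sigma> j = k) else l) l < e) sequentially"
    unfolding eventually_sequentially by blast
qed

lemma subseq_at:
  fixes \<sigma> :: "nat \<Rightarrow> nat"
  assumes sm: "strict_mono \<sigma>"
  shows "(if \<exists>j. \<sigma> j = \<sigma> i then g (SOME j. \<sigma> j = \<sigma> i) else l) = g i"
proof -
  have "inj \<sigma>" using sm by (rule strict_mono_imp_inj_on)
  then have "(SOME j. \<sigma> j = \<sigma> i) = i" by (metis (mono_tags, lifting) injD someI_ex)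
  then show ?thesis by auto
qed

lemma LB:
  fixes uk :: "nat \<Rightarrow> 'a::metric_space \<Rightarrow> ereal" and \<Psi> :: "'a \<times> 'b::metric_space \<Rightarrow> real"
  assumes li: "\<forall>x xs. xs \<longlonglongrightarrow> x \<longrightarrow> u x \<le> liminf (\<lambda>k. uk k (xs k))"
    and P: "compact P" and cont: "continuous_on P \<Psi>" and le: "\<forall>p\<in>P. ereal (\<Psi> p) \<le> u (fst p)"
    and e: "\<epsilon> > 0"
  shows "eventually (\<lambda>k. \<forall>p\<in>P. ereal (\<Psi> p - \<epsilon>) \<le> uk k (fst p)) sequentially"
proof (rule ccontr)
  assume "\<not> ?thesis"
  then obtain r :: "nat \<Rightarrow> nat" where r: "strict_mono r" "\<forall>n. \<not> (\<forall>p\<in>P. ereal (\<Psi> p - \<epsilon>) \<le> uk (r n) (fst p))"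
    using not_eventually_sequentiallyD by blast
  then have "\<forall>n. \<exists>p. p \<in> P \<and> uk (r n) (fst p) < ereal (\<Psi> p - \<epsilon>)" by (meson not_le)
  then obtain pp where pp: "\<And>n. pp n \<in> P" "\<And>n. uk (r n) (fst (pp n)) < ereal (\<Psi> (pp n) - \<epsilon>)" by metis
  obtain l s where ls: "l \<in> P" "strict_mono (s :: nat \<Rightarrow> nat)" "(pp \<circ> s) \<longlonglongrightarrow> l"
    using seq_compactE[OF compact_imp_seq_compact[OF P], of pp] pp(1) by blast
  define \<sigma> where "\<sigma> = r \<circ> s"
  have sm: "strict_mono \<sigma>" unfolding \<sigma>_def using r(1) ls(2) by (rule strict_mono_o)
  define g where "g j = fst (pp (s j))" for j
  have g: "g \<longlonglongrightarrow> fst l" unfolding g_def using tendsto_fst[OF ls(3)] by (simp add: o_def)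
  define xs where "xs k = (if \<exists>j. \<sigma> j = k then g (SOME j. \<sigma> j = k) else fst l)" for k
  have xs: "xs \<longlonglongrightarrow> fst l" unfolding xs_def by (rule subseq_ext[OF sm g])
  have "u (fst l) \<le> liminf (\<lambda>k. uk k (xs k))" using li xs by blast
  moreover have "ereal (\<Psi> l - \<epsilon>/2) < u (fst l)"
  proof -
    have "ereal (\<Psi> l - \<epsilon>/2) < ereal (\<Psi> l)" using e by simp
    then show ?thesis using le ls(1) by (blast intro: less_le_trans)
  qed
  ultimately have "eventually (\<lambda>k. ereal (\<Psi> l - \<epsilon>/2) < uk k (xs k)) sequentially"
    unfolding le_Liminf_iff by blast
  then have ev1: "eventually (\<lambda>j. ereal (\<Psi> l - \<epsilon>/2) < uk (\<sigma> j) (xs (\<sigma> j))) sequentially"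
    by (rule eventually_subseq[OF sm])
  have t: "(\<lambda>j. \<Psi> (pp (s j))) \<longlonglongrightarrow> \<Psi> l"
    using continuous_on_tendsto_compose[OF cont ls(3) ls(1)] pp(1) by (simp add: o_def)
  have ev2: "eventually (\<lambda>j. \<Psi> (pp (s j)) < \<Psi> l + \<epsilon>/2) sequentially"
    using order_tendstoD(2)[OF t, of "\<Psi> l + \<epsilon>/2"] e by simp
  have "eventually (\<lambda>j. False) sequentially" using ev1 ev2
  proof eventually_elim
    case (elim j)
    have "xs (\<sigma> j) = g j" unfolding xs_def by (rule subseq_at[OF sm])
    then have "uk (\<sigma> j) (xs (\<sigma> j)) < ereal (\<Psi> (pp (s j)) - \<epsilon>)" using pp(2)[of "s j"] unfolding g_def \<sigma>_def by simp
    then have "ereal (\<Psi> l - \<epsilon>/2) < ereal (\<Psi> (pp (s j)) - \<epsilon>)" using elim(1) by (rule less_trans[rotated])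
    then show False using elim(2) by simp
  qed
  then show False by simp
qed


lemma bound_on_cball:
  fixes F :: "'a::euclidean_space \<Rightarrow> real"
  assumes "continuous_on UNIV F"
  shows "\<exists>S>0. \<forall>w\<in>cball 0 R. \<bar>F w\<bar> \<le> S"
proof -
  have "compact (F ` cball 0 R)"
    by (rule compact_continuous_image[OF continuous_on_subset[OF assms] compact_cball]) simp
  then have "bounded (F ` cball 0 R)" by (rule compact_imp_bounded)
  then obtain S where "S > 0" "\<forall>x\<in>F ` cball 0 R. norm x \<le> S" unfolding bounded_pos by blast
  then show ?thesis by auto
qed

lemma U_bound:
  fixes uk :: "nat \<Rightarrow> 'a::euclidean_space \<Rightarrow> ereal" and F :: "'a \<Rightarrow> real"
  assumes cv: "\<forall>k. convex_efun (uk k)" and nm: "\<forall>k z. uk k z \<noteq> -\<infinity>"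
    and li: "\<forall>x xs. xs \<longlonglongrightarrow> x \<longrightarrow> u x \<le> liminf (\<lambda>k. uk k (xs k))"
    and ls: "\<forall>x. \<exists>xs. xs \<longlonglongrightarrow> x \<and> limsup (\<lambda>k. uk k (xs k)) \<le> u x"
    and Fd: "\<And>w. fconj u w = ereal (F w)" and Fc: "continuous_on UNIV F"
    and gr: "\<forall>K. \<exists>\<rho>>0. \<forall>z. \<rho> \<le> norm z \<longrightarrow> ereal (K * norm z) \<le> u z"
    and c0: "u c0 = ereal a0" and R: "R > 0" and e: "\<epsilon> > 0"
  shows "eventually (\<lambda>k. \<forall>w\<in>cball 0 R. fconj (uk k) w \<le> ereal (F w + \<epsilon>)) sequentially"
proof -
  obtain S where S: "S > 0" "\<forall>w\<in>cball 0 R. \<bar>F w\<bar> \<le> S" using bound_on_cball[OF Fc] by blast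
  obtain \<rho>0 where rho0: "\<rho>0 > 0" "\<forall>z. \<rho>0 \<le> norm z \<longrightarrow> ereal ((R + 1) * norm z) \<le> u z" using gr by blast
  define T where "T = max S \<rho>0"
  obtain zs where zs: "zs \<longlonglongrightarrow> c0" "limsup (\<lambda>k. uk k (zs k)) \<le> ereal a0" using ls c0 by metis
  have ev1: "eventually (\<lambda>k. uk k (zs k) < ereal (a0 + 1)) sequentially"
    using zs(2) unfolding Limsup_le_iff by simp
  have ev2: "eventually (\<lambda>k. dist (zs k) c0 < 1) sequentially" using tendstoD[OF zs(1)] by simp
  define C where "C = norm c0"
  define A where "A = \<bar>a0 + 1\<bar> + R * (C + 1) + S"
  have A0: "A \<ge> 0" unfolding A_def C_def using R S by simp
  define D where "D = A + C + T + \<epsilon> + 2"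
  define \<rho> where "\<rho> = D + C + 1"
  define \<Psi> where "\<Psi> p = inner (fst p) (snd p) - F (snd p) + max 0 (norm (fst p) - T)" for p :: "'a \<times> 'a"
  define P where "P = cball (0::'a) \<rho> \<times> cball (0::'a) R"
  have cP: "compact P" unfolding P_def by (intro compact_Times compact_cball)
  have cF: "continuous_on UNIV (\<lambda>p::'a\<times>'a. F (snd p))"
    by (rule continuous_on_compose2[OF Fc continuous_on_snd]) auto
  have cPsi: "continuous_on P \<Psi>" unfolding \<Psi>_def
    by (intro continuous_intros continuous_on_subset[OF cF]) auto
  have lePsi: "\<forall>p\<in>P. ereal (\<Psi> p) \<le> u (fst p)"
  proof
    fix p assume "p \<in> P"
    then obtain z w where p: "p = (z, w)" "norm w \<le> R" unfolding P_def by auto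
    have Fw: "\<bar>F w\<bar> \<le> S" using S(2) p(2) by simp
    show "ereal (\<Psi> p) \<le> u (fst p)"
    proof (cases "norm z \<le> T")
      case True
      then have "\<Psi> p = inner z w - F w" unfolding \<Psi>_def p by simp
      then show ?thesis using FY[OF Fd, of z w] p by simp
    next
      case False
      then have z1: "\<rho>0 \<le> norm z" unfolding T_def by simp
      have "inner z w \<le> norm z * norm w" using Cauchy_Schwarz_ineq2[of z w] by simp
      also have "\<dots> \<le> norm z * R" using p(2) by (intro mult_left_mono) auto
      finally have "\<Psi> p \<le> (R + 1) * norm z" unfolding \<Psi>_def p using False Fw unfolding T_def
        by (simp add: algebra_simps; linarith)
      then have "ereal (\<Psi> p) \<le> ereal ((R + 1) * norm z)" by simp
      also have "\<dots> \<le> u z" using rho0(2) z1 by blast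
      finally show ?thesis using p by simp
    qed
  qed
  have ev3: "eventually (\<lambda>k. \<forall>p\<in>P. ereal (\<Psi> p - \<epsilon>) \<le> uk k (fst p)) sequentially"
    by (rule LB[OF li cP cPsi lePsi e])
  from ev1 ev2 ev3 show ?thesis
  proof eventually_elim
    case (elim k)
    show ?case
    proof
      fix w :: 'a assume w: "w \<in> cball 0 R"
      then have nw: "norm w \<le> R" by simp
      have Fw: "\<bar>F w\<bar> \<le> S" using S(2) w by simp
      have "ereal (inner z w + (- (F w + \<epsilon>))) \<le> uk k z" for z
      proof (cases "norm z \<le> \<rho>")
        case True
        then have "(z, w) \<in> P" unfolding P_def using nw by simp
        then have "ereal (\<Psi> (z, w) - \<epsilon>) \<le> uk k z" using elim(3) by force
        moreover have "inner z w + (- (F w + \<epsilon>)) \<le> \<Psi> (z, w) - \<epsilon>" unfolding \<Psi>_def by simp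
        ultimately show ?thesis by (meson ereal_less_eq(3) order.trans)
      next
        case False
        show ?thesis
        proof (cases "uk k z")
          case PInf then show ?thesis by simp
        next
          case MInf then show ?thesis using nm by simp
        next
          case (real sz)
          define zk where "zk = zs k"
          obtain s0 where s0: "uk k zk = ereal s0" "s0 < a0 + 1"
            using elim(1) nm unfolding zk_def by (cases "uk k (zs k)") auto
          have nzk: "norm zk < C + 1" using elim(2) unfolding zk_def C_def dist_norm
            using norm_triangle_ineq2[of "zs k" c0] by linarith
          define d where "d = norm (z - zk)"
          have "norm z \<le> norm zk + d" unfolding d_def using norm_triangle_ineq2[of z zk] by linarith
          then have dD: "d > D" using False nzk unfolding \<rho>_def by linarith
          have "C \<ge> 0" "T \<ge> 0" unfolding C_def T_def using S by auto
          then have D0: "D > 0" unfolding D_def using A0 e by linarith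
          define t where "t = D / d"
          have t: "0 < t" "t < 1" unfolding t_def using dD D0 by auto
          define p where "p = (1 - t) *\<^sub>R zk + t *\<^sub>R z"
          have pz: "p - zk = t *\<^sub>R (z - zk)" unfolding p_def by (simp add: algebra_simps)
          have dpos: "d > 0" using D0 dD by linarith
          have npz: "norm (p - zk) = D" unfolding pz using dpos t D0 unfolding t_def d_def by simp
          have "norm p \<le> norm zk + norm (p - zk)" using norm_triangle_ineq2[of p zk] by linarith
          then have np1: "norm p \<le> \<rho>" using npz nzk unfolding \<rho>_def by linarith
          have "norm (p - zk) \<le> norm p + norm zk" using norm_triangle_ineq4[of p zk] by simp
          then have np2: "D - C - 1 \<le> norm p" using npz nzk by linarith
          have "(p, w) \<in> P" unfolding P_def using np1 nw by simp
          then have lp: "ereal (\<Psi> (p, w) - \<epsilon>) \<le> uk k p" using elim(3) by force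
          have cvp: "uk k p \<le> ereal ((1 - t) * s0 + t * sz)"
            unfolding p_def by (rule conv_real[OF cv[rule_format] s0(1) real]) (use t in auto)
          have h1: "\<Psi> (p, w) - \<epsilon> \<le> (1 - t) * s0 + t * sz" using lp cvp by (meson ereal_less_eq(3) order.trans)
          have ip: "inner p w = (1 - t) * inner zk w + t * inner z w" unfolding p_def by (simp add: inner_add_left)
          have "\<Psi> (p, w) \<ge> inner p w - F w + (D - C - 1 - T)" unfolding \<Psi>_def using np2 by simp
          then have h2: "(1 - t) * (s0 - inner zk w + F w) + t * (sz - inner z w + F w) \<ge> A + 1"
            using h1 ip unfolding D_def by (simp add: algebra_simps)
          have "inner zk w \<ge> - (norm zk * norm w)" using Cauchy_Schwarz_ineq2[of zk w] by (simp add: abs_le_iff)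
          moreover have "norm zk * norm w \<le> (C + 1) * R" using nzk nw by (intro mult_mono) (auto simp: C_def)
          ultimately have "s0 - inner zk w + F w \<le> A" unfolding A_def using s0(2) Fw by (simp add: algebra_simps; linarith)
          then have "(1 - t) * (s0 - inner zk w + F w) \<le> (1 - t) * A" using t by (intro mult_left_mono) auto
          then have "t * (sz - inner z w + F w) \<ge> t * A + 1" using h2 by (simp add: algebra_simps)
          then have "t * (sz - inner z w + F w) > t * A" by linarith
          then have "sz - inner z w + F w > A" using t by (simp add: mult_less_cancel_left_pos)
          then have "inner z w + (- (F w + \<epsilon>)) \<le> sz" using A0 e by linarith
          then show ?thesis using real by simp
        qed
      qed
      then show "fconj (uk k) w \<le> ereal (F w + \<epsilon>)" using fconj_le[of w "- (F w + \<epsilon>)" "uk k"] by (simp add: add.commute)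
    qed
  qed
qed


lemma L_bound:
  fixes uk :: "nat \<Rightarrow> 'a::euclidean_space \<Rightarrow> ereal" and F :: "'a \<Rightarrow> real"
  assumes nm: "\<forall>k z. uk k z \<noteq> -\<infinity>" and unm: "\<forall>z. u z \<noteq> -\<infinity>"
    and ls: "\<forall>x. \<exists>xs. xs \<longlonglongrightarrow> x \<and> limsup (\<lambda>k. uk k (xs k)) \<le> u x"
    and Fd: "\<And>w. fconj u w = ereal (F w)" and Fc: "continuous_on UNIV F"
    and e: "\<epsilon> > 0"
  shows "eventually (\<lambda>k. \<forall>w\<in>cball 0 R. ereal (F w - \<epsilon>) \<le> fconj (uk k) w) sequentially"
proof (rule ccontr)
  assume "\<not> ?thesis"
  then obtain r :: "nat \<Rightarrow> nat" where r: "strict_mono r" "\<forall>n. \<not> (\<forall>w\<in>cball 0 R. ereal (F w - \<epsilon>) \<le> fconj (uk (r n)) w)"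
    using not_eventually_sequentiallyD by blast
  then have "\<forall>n. \<exists>w. w \<in> cball 0 R \<and> fconj (uk (r n)) w < ereal (F w - \<epsilon>)" by (meson not_le)
  then obtain ww where ww: "\<And>n. ww n \<in> cball 0 R" "\<And>n. fconj (uk (r n)) (ww n) < ereal (F (ww n) - \<epsilon>)" by metis
  obtain w0 s where ls0: "w0 \<in> cball 0 R" "strict_mono (s :: nat \<Rightarrow> nat)" "(ww \<circ> s) \<longlonglongrightarrow> w0"
    using seq_compactE[OF compact_imp_seq_compact[OF compact_cball], of ww] ww(1) by blast
  have "ereal (F w0 - \<epsilon>/4) < fconj u w0" using Fd e by simp
  then obtain z0 where z0: "ereal (F w0 - \<epsilon>/4) < ereal (inner z0 w0) - u z0"
    unfolding fconj_def less_SUP_iff by blast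
  then obtain b0 where b0: "u z0 = ereal b0" using unm by (cases "u z0") auto
  have zb: "F w0 - \<epsilon>/4 < inner z0 w0 - b0" using z0 b0 by simp
  obtain zs where zs: "zs \<longlonglongrightarrow> z0" "limsup (\<lambda>k. uk k (zs k)) \<le> ereal b0" using ls b0 by metis
  have "eventually (\<lambda>k. uk k (zs k) < ereal (b0 + \<epsilon>/4)) sequentially"
    using zs(2) e unfolding Limsup_le_iff by simp
  define \<sigma> where "\<sigma> = r \<circ> s"
  have sm: "strict_mono \<sigma>" unfolding \<sigma>_def using r(1) ls0(2) by (rule strict_mono_o)
  have ev1: "eventually (\<lambda>j. uk (\<sigma> j) (zs (\<sigma> j)) < ereal (b0 + \<epsilon>/4)) sequentially"
    by (rule eventually_subseq[OF sm]) fact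
  have "(\<lambda>j. zs (\<sigma> j)) \<longlonglongrightarrow> z0" using LIMSEQ_subseq_LIMSEQ[OF zs(1) sm] by (simp add: o_def)
  moreover have "(\<lambda>j. ww (s j)) \<longlonglongrightarrow> w0" using ls0(3) by (simp add: o_def)
  ultimately have "(\<lambda>j. inner (zs (\<sigma> j)) (ww (s j))) \<longlonglongrightarrow> inner z0 w0" by (rule tendsto_inner)
  then have ev2: "eventually (\<lambda>j. inner z0 w0 - \<epsilon>/4 < inner (zs (\<sigma> j)) (ww (s j))) sequentially"
    using order_tendstoD(1)[of _ "inner z0 w0" _ "inner z0 w0 - \<epsilon>/4"] e by simp
  have t: "(\<lambda>j. F (ww (s j))) \<longlonglongrightarrow> F w0"
    using continuous_on_tendsto_compose[OF Fc ls0(3)] by (simp add: o_def)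
  have ev3: "eventually (\<lambda>j. F (ww (s j)) < F w0 + \<epsilon>/4) sequentially"
    using order_tendstoD(2)[OF t, of "F w0 + \<epsilon>/4"] e by simp
  have "eventually (\<lambda>j. False) sequentially" using ev1 ev2 ev3
  proof eventually_elim
    case (elim j)
    define k where "k = \<sigma> j"
    define w where "w = ww (s j)"
    have k: "k = r (s j)" unfolding k_def \<sigma>_def by simp
    obtain q where q: "uk k (zs k) = ereal q" "q < b0 + \<epsilon>/4"
      using elim(1) nm unfolding k_def by (cases "uk (\<sigma> j) (zs (\<sigma> j))") auto
    have "ereal (inner (zs k) w) - uk k (zs k) \<le> fconj (uk k) w" unfolding fconj_def by (rule SUP_upper) simp
    moreover have "fconj (uk k) w < ereal (F w - \<epsilon>)" using ww(2)[of "s j"] unfolding k w_def .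
    ultimately have "ereal (inner (zs k) w - q) < ereal (F w - \<epsilon>)" using q
      by (metis ereal_minus(1) le_less_trans)
    then have "inner (zs k) w - q < F w - \<epsilon>" by simp
    then show False using elim(2,3) zb q(2) unfolding k_def w_def by linarith
  qed
  then show False by simp
qed


lemma P1:
  fixes uk :: "nat \<Rightarrow> 'a::euclidean_space \<Rightarrow> ereal"
  assumes uk: "\<forall>k. uk k \<in> Conv_coe" and u: "u \<in> Conv_coe"
    and d: "(\<lambda>k. delta (uk k) u) \<longlonglongrightarrow> 0"
  shows "epi_converges uk u"
  unfolding epi_converges_def
  using P1_liminf[OF uk u d] P1_limsup[OF uk u d] by blast

lemma delta_nonneg: "0 \<le> delta u v"
  unfolding delta_def by (rule Inf_greatest) auto

lemma P2:
  fixes uk :: "nat \<Rightarrow> 'a::euclidean_space \<Rightarrow> ereal"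
  assumes uk: "\<forall>k. uk k \<in> Conv_sc" and u: "u \<in> Conv_sc" and epi: "epi_converges uk u"
  shows "(\<lambda>k. delta (uk k) u) \<longlonglongrightarrow> 0"
proof -
  have li: "\<forall>x xs. xs \<longlonglongrightarrow> x \<longrightarrow> u x \<le> liminf (\<lambda>k. uk k (xs k))"
    and ls: "\<forall>x. \<exists>xs. xs \<longlonglongrightarrow> x \<and> limsup (\<lambda>k. uk k (xs k)) \<le> u x"
    using epi unfolding epi_converges_def by auto
  have ucoe: "u \<in> Conv_coe" using u unfolding Conv_sc_def by auto
  have ukcoe: "\<And>k. uk k \<in> Conv_coe" using uk unfolding Conv_sc_def by auto
  note uf = coe_facts[OF ucoe]
  have cv: "\<forall>k. convex_efun (uk k)" using coe_facts(1)[OF ukcoe] by blast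
  have nm: "\<forall>k z. uk k z \<noteq> -\<infinity>" using coe_facts(5)[OF ukcoe] by blast
  define F where "F w = real_of_ereal (fconj u w)" for w
  have Fd: "fconj u w = ereal (F w)" for w
    using sc_conj_fin[OF u, of w] unfolding F_def by auto
  have Fc: "continuous_on UNIV F" by (rule conj_cont[OF Fd])
  have gr: "\<forall>K. \<exists>\<rho>>0. \<forall>z. \<rho> \<le> norm z \<longrightarrow> ereal (K * norm z) \<le> u z" using sc_growth[OF u] by blast
  obtain c0 where "u c0 \<noteq> \<infinity>" using uf(6) by blast
  then obtain a0 where c0: "u c0 = ereal a0" using uf(5) by (cases "u c0") auto
  show ?thesis
  proof (rule order_tendstoI)
    fix a :: ereal assume "a < 0"
    then have "\<forall>k. a < delta (uk k) u" using delta_nonneg less_le_trans by blast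
    then show "eventually (\<lambda>k. a < delta (uk k) u) sequentially" by simp
  next
    fix a :: ereal assume "0 < a"
    then obtain \<epsilon> where ea: "0 < ereal \<epsilon>" "ereal \<epsilon> < a" using ereal_dense2 by blast
    then have e: "\<epsilon> > 0" by simp
    have R: "1 / \<epsilon> > 0" using e by simp
    have evU: "eventually (\<lambda>k. \<forall>w\<in>cball 0 (1/\<epsilon>). fconj (uk k) w \<le> ereal (F w + \<epsilon>)) sequentially"
      by (rule U_bound[OF cv nm li ls Fd Fc gr c0 R e])
    have evL: "eventually (\<lambda>k. \<forall>w\<in>cball 0 (1/\<epsilon>). ereal (F w - \<epsilon>) \<le> fconj (uk k) w) sequentially"
      by (rule L_bound[OF nm uf(5) ls Fd Fc e])
    from evU evL show "eventually (\<lambda>k. delta (uk k) u < a) sequentially"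
    proof eventually_elim
      case (elim k)
      have "(SUP x\<in>cball 0 (1 / \<epsilon>). ediff (fconj (uk k) x) (fconj u x)) \<le> ereal \<epsilon>"
      proof (rule SUP_least)
        fix w :: 'a assume w: "w \<in> cball 0 (1 / \<epsilon>)"
        have b1: "fconj (uk k) w \<le> ereal (F w + \<epsilon>)" and b2: "ereal (F w - \<epsilon>) \<le> fconj (uk k) w"
          using elim w by auto
        then obtain x where x: "fconj (uk k) w = ereal x" by (cases "fconj (uk k) w") auto
        have "\<bar>x - F w\<bar> \<le> \<epsilon>" using b1 b2 x by (simp add: abs_le_iff; linarith)
        then show "ediff (fconj (uk k) w) (fconj u w) \<le> ereal \<epsilon>"
          using e unfolding ediff_def x Fd by auto
      qed
      then have "delta (uk k) u \<le> ereal \<epsilon>"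
        unfolding delta_def using e by (intro Inf_lower) blast
      then show ?case using ea(2) by (rule le_less_trans)
    qed
  qed
qed

theorem lemma5p12:
  fixes uk :: "nat \<Rightarrow> 'a::euclidean_space \<Rightarrow> ereal" and u :: "'a \<Rightarrow> ereal"
  shows "((\<forall>k. uk k \<in> Conv_coe) \<and> u \<in> Conv_coe \<and> (\<lambda>k. delta (uk k) u) \<longlonglongrightarrow> 0
           \<longrightarrow> epi_converges uk u) \<and>
         ((\<forall>k. uk k \<in> Conv_sc) \<and> u \<in> Conv_sc \<and> epi_converges uk u
           \<longrightarrow> (\<lambda>k. delta (uk k) u) \<longlonglongrightarrow> 0)"
  using P1 P2 by blast

end
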